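(* Let $\{W(t),t\ge0\}$ be a $d$-dimensional Brownian motion and $\beta\in\mathcal M^d$. Then almost surely $$\liminf_{t\searrow0}\frac1t\,|W(t)^T\beta W(t)|=0.$$
   Context: $\mathcal M^d$ denotes the set of real $d\times d$ matrices. *)

theory Defs
  imports "HOL-Probability.Probability"
begin

text \<open>A d-dimensional (standard) Brownian motion started at 0 on the probability
space M, indexed by time t \<ge> 0 (values for t < 0 are irrelevant).\<close>

definition brownian_motion :: "'a measure \<Rightarrow> (real \<Rightarrow> 'a \<Rightarrow> real^'d) \<Rightarrow> bool" where
  "brownian_motion M W \<longleftrightarrow>
     prob_space M \<and>
     (\<forall>t\<ge>0. W t \<in> borel_measurable M) \<and>
     (AE \<omega> in M. W 0 \<omega> = 0) \<and>
     (AE \<omega> in M. continuous_on {0..} (\<lambda>t. W t \<omega>)) \<and>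
     (\<forall>s t. 0 \<le> s \<and> s < t \<longrightarrow>
        distributed M lborel (\<lambda>\<omega>. W t \<omega> - W s \<omega>)
          (\<lambda>x. ennreal (\<Prod>i\<in>UNIV. normal_density 0 (sqrt (t - s)) (x $ i)))) \<and>
     (\<forall>(n::nat) (\<tau>::nat \<Rightarrow> real). 0 \<le> \<tau> 0 \<and> (\<forall>i<n. \<tau> i < \<tau> (Suc i)) \<longrightarrow>
        prob_space.indep_vars M (\<lambda>_. borel) (\<lambda>i \<omega>. W (\<tau> (Suc i)) \<omega> - W (\<tau> i) \<omega>) {..<n})"

end

theory Submission
  imports Defs
begin

lemma tail_small:
  fixes W :: "real \<Rightarrow> 'a \<Rightarrow> real^'d"
  assumes bm: "brownian_motion M W" and r: "r > 0" and e: "e > 0" and T: "T > 0"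
  shows "\<exists>s. 0 < s \<and> s \<le> T \<and> measure M {\<omega>\<in>space M. r < norm (W s \<omega>)} \<le> e"
proof -
  have P: "prob_space M" and meas: "\<And>t. t \<ge> 0 \<Longrightarrow> W t \<in> borel_measurable M"
    and z: "AE \<omega> in M. W 0 \<omega> = 0" and c: "AE \<omega> in M. continuous_on {0..} (\<lambda>t. W t \<omega>)"
    using bm unfolding brownian_motion_def by auto
  interpret prob_space M by (rule P)
  define s where "s n = T / real (Suc n)" for n
  have sp: "s n > 0" for n using T by (simp add: s_def)
  have slim: "s \<longlonglongrightarrow> 0" unfolding s_def using LIMSEQ_Suc[OF lim_const_over_n[of T]] by simp
  define S where "S n = {\<omega>\<in>space M. r < norm (W (s n) \<omega>)}" for n
  have Ssets: "S n \<in> sets M" for n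
  proof -
    have [measurable]: "W (s n) \<in> borel_measurable M" using meas sp less_imp_le by blast
    show ?thesis unfolding S_def by measurable
  qed
  define A where "A n = (\<Union>j. S (j + n))" for n
  have Asets: "range A \<subseteq> sets M" using Ssets by (auto simp: A_def)
  have Adec: "decseq A"
    unfolding A_def by (intro decseq_SucI UN_least) (metis UNIV_I UN_upper add_Suc_shift)
  have lim: "(\<lambda>n. measure M (A n)) \<longlonglongrightarrow> measure M (\<Inter>(range A))"
    by (rule finite_Lim_measure_decseq[OF Asets Adec])
  have AE1: "AE \<omega> in M. \<omega> \<notin> \<Inter>(range A)"
    using z c
  proof eventually_elim
    case (elim \<omega>)
    have "((\<lambda>t. W t \<omega>) \<longlongrightarrow> W 0 \<omega>) (at 0 within {0..})"
      using elim(2) unfolding continuous_on_def by auto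
    moreover have "filterlim s (at 0 within {0..}) sequentially"
      unfolding filterlim_at using slim sp by (auto intro!: always_eventually less_imp_le) (metis less_irrefl)
    ultimately have "(\<lambda>n. W (s n) \<omega>) \<longlonglongrightarrow> 0"
      using filterlim_compose elim(1) by fastforce
    hence "(\<lambda>n. norm (W (s n) \<omega>)) \<longlonglongrightarrow> 0" by (rule tendsto_norm_zero)
    hence "eventually (\<lambda>n. norm (W (s n) \<omega>) < r) sequentially"
      using r by (rule order_tendstoD)
    then obtain N where N: "\<And>n. n \<ge> N \<Longrightarrow> norm (W (s n) \<omega>) < r"
      unfolding eventually_sequentially by auto
    have "\<omega> \<notin> A N" unfolding A_def S_def using N by (auto simp: not_less) (metis le_add2 less_imp_le)
    then show ?case by auto
  qed
  have "emeasure M (\<Inter>(range A)) = 0"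
    using AE1 Asets by (subst (asm) AE_iff_measurable[of "\<Inter>(range A)"]) (auto simp: A_def S_def)
  hence "measure M (\<Inter>(range A)) = 0" by (simp add: measure_def)
  with lim have "eventually (\<lambda>n. measure M (A n) < e) sequentially"
    using e by (auto dest: order_tendstoD)
  then obtain n where n: "measure M (A n) < e" by (auto simp: eventually_sequentially)
  have "S n \<subseteq> A n" unfolding A_def using UN_upper[of 0 UNIV "\<lambda>j. S (j + n)"] by simp
  hence "measure M (S n) \<le> measure M (A n)"
    using Asets by (intro finite_measure_mono) auto
  with n have "measure M (S n) \<le> e" by simp
  moreover have "s n \<le> T" using T by (simp add: s_def field_simps)
  ultimately show ?thesis using sp unfolding S_def by blast
qed


lemma dens_lower:
  fixes t v x \<delta> :: real
  assumes t: "0 < t" and v: "0 < v" "v \<le> t" "t \<le> 2 * v" and x: "\<bar>x\<bar> \<le> \<delta> * sqrt t"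
  shows "exp (- (\<delta>^2)) / sqrt (2 * pi * t) \<le> normal_density 0 (sqrt v) x"
proof -
  have sq: "(sqrt v)^2 = v" using v by simp
  have "x^2 \<le> (\<delta> * sqrt t)^2" using x by (metis abs_ge_zero abs_le_square_iff abs_of_nonneg dual_order.trans power2_abs)
  also have "\<dots> = \<delta>^2 * t" using t by (simp add: power_mult_distrib)
  finally have x2: "x^2 \<le> \<delta>^2 * t" .
  have "x^2 / (2 * v) \<le> \<delta>^2 * t / t"
    using x2 t v by (intro frac_le) auto
  hence e1: "x^2 / (2 * v) \<le> \<delta>^2" using t by simp
  have "exp (- (\<delta>^2)) \<le> exp (- ((x - 0)^2) / (2 * (sqrt v)^2))"
    using e1 by (simp add: sq)
  moreover have "1 / sqrt (2 * pi * t) \<le> 1 / sqrt (2 * pi * (sqrt v)^2)"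
    using v t by (simp add: sq frac_le)
  ultimately have "1 / sqrt (2 * pi * t) * exp (- (\<delta>^2)) \<le> 1 / sqrt (2 * pi * (sqrt v)^2) * exp (- ((x - 0)^2) / (2 * (sqrt v)^2))"
    by (intro mult_mono) auto
  thus ?thesis unfolding normal_density_def by simp
qed

lemma incr_lower:
  fixes W :: "real \<Rightarrow> 'a \<Rightarrow> real^'d"
  assumes bm: "brownian_motion M W" and st: "0 \<le> s" "s < t" "t \<le> 2 * (t-s)" and dl: "\<delta> > 0"
  shows "(2 * \<delta> * exp(- (\<delta>^2))/(real CARD('d) * sqrt(2 * pi)))^CARD('d)
           \<le> measure M {\<omega>\<in>space M. norm (W t \<omega> - W s \<omega>) \<le> \<delta> * sqrt t}"
proof -
  have P: "prob_space M" and meas: "\<And>t. t \<ge> 0 \<Longrightarrow> W t \<in> borel_measurable M"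
    and D: "distributed M lborel (\<lambda>\<omega>. W t \<omega> - W s \<omega>)
          (\<lambda>x. ennreal (\<Prod>i\<in>UNIV. normal_density 0 (sqrt (t - s)) (x $ i)))"
    using bm st unfolding brownian_motion_def by auto
  interpret prob_space M by (rule P)
  have t: "t > 0" using st by linarith
  define d where "d = real CARD('d)"
  have d1: "d \<ge> 1" unfolding d_def by (simp add: Suc_le_eq)
  define c where "c = \<delta> * sqrt t / d"
  have c0: "c > 0" using dl t d1 by (simp add: c_def)
  have cle: "c \<le> \<delta> * sqrt t" unfolding c_def using dl t d1
    using divide_left_mono[of 1 d "\<delta> * sqrt t"] by simp
  define B :: "(real^'d) set" where "B = cbox (- (\<chi> i. c)) (\<chi> i. c)"
  have memB: "x \<in> B \<longleftrightarrow> (\<forall>i. \<bar>x $ i\<bar> \<le> c)" for x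
    unfolding B_def mem_box_cart by (auto simp: abs_le_iff) (metis minus_le_iff)+
  have Bsub: "norm x \<le> \<delta> * sqrt t" if "x \<in> B" for x
  proof -
    have "norm x \<le> (\<Sum>i\<in>UNIV. \<bar>x$i\<bar>)" by (rule norm_le_l1_cart)
    also have "\<dots> \<le> (\<Sum>i\<in>(UNIV::'d set). c)" using that memB by (intro sum_mono) auto
    also have "\<dots> = \<delta> * sqrt t" using d1 by (simp add: c_def d_def)
    finally show ?thesis .
  qed
  define L where "L = (exp (- (\<delta>^2)) / sqrt (2 * pi * t)) ^ CARD('d)"
  have L0: "0 \<le> L" using t by (simp add: L_def)
  have Lpt: "ennreal L * indicator B x \<le> ennreal (\<Prod>i\<in>UNIV. normal_density 0 (sqrt (t - s)) (x $ i)) * indicator B x" for x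
  proof (cases "x \<in> B")
    case True
    have "L \<le> (\<Prod>i\<in>UNIV. normal_density 0 (sqrt (t - s)) (x $ i))"
      unfolding L_def prod_constant[symmetric]
    proof (intro prod_mono conjI)
      fix i
      show "0 \<le> exp (- (\<delta>^2)) / sqrt (2 * pi * t)" using t by simp
      show "exp (- (\<delta>^2)) / sqrt (2 * pi * t) \<le> normal_density 0 (sqrt (t - s)) (x $ i)"
        using True memB[of x] cle st t by (intro dens_lower) (force, force, force, force, meson order_trans)
    qed
    then show ?thesis using True by (simp add: ennreal_leI)
  qed simp
  have Bsets: "B \<in> sets lborel" unfolding B_def by simp
  have "emeasure lborel B = ennreal ((2 * c) ^ CARD('d))"
  proof -
    have ne: "B \<noteq> {}" using memB[of 0] c0 by auto
    have "emeasure lborel B = ennreal (measure lborel B)"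
      unfolding B_def using emeasure_lborel_cbox_finite[of "- (\<chi> i. c)" "(\<chi> i. c)::real^'d"] by (intro emeasure_eq_ennreal_measure) (simp add: less_top)
    also have "measure lborel B = (\<Prod>i\<in>(UNIV::'d set). c - (- c))"
      using ne unfolding B_def by (subst content_cbox_cart) auto
    also have "\<dots> = (2 * c) ^ CARD('d)" by simp
    finally show ?thesis .
  qed
  have "ennreal L * emeasure lborel B = (\<integral>\<^sup>+x. ennreal L * indicator B x \<partial>lborel)"
    using Bsets by (simp add: nn_integral_cmult_indicator)
  also have "\<dots> \<le> (\<integral>\<^sup>+x\<in>B. ennreal (\<Prod>i\<in>UNIV. normal_density 0 (sqrt (t - s)) (x $ i)) \<partial>lborel)"
    by (intro nn_integral_mono Lpt)
  also have "\<dots> = emeasure M ((\<lambda>\<omega>. W t \<omega> - W s \<omega>) -` B \<inter> space M)"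
    using distributed_emeasure[OF D Bsets] by simp
  also have "\<dots> \<le> emeasure M {\<omega>\<in>space M. norm (W t \<omega> - W s \<omega>) \<le> \<delta> * sqrt t}"
  proof (rule emeasure_mono)
    show "(\<lambda>\<omega>. W t \<omega> - W s \<omega>) -` B \<inter> space M \<subseteq> {\<omega>\<in>space M. norm (W t \<omega> - W s \<omega>) \<le> \<delta> * sqrt t}"
      using Bsub by auto
    have [measurable]: "W t \<in> borel_measurable M" "W s \<in> borel_measurable M" using meas st by auto
    show "{\<omega>\<in>space M. norm (W t \<omega> - W s \<omega>) \<le> \<delta> * sqrt t} \<in> sets M" by measurable
  qed
  finally have 1: "ennreal L * emeasure lborel B \<le> ennreal (measure M {\<omega>\<in>space M. norm (W t \<omega> - W s \<omega>) \<le> \<delta> * sqrt t})"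
    by (simp add: emeasure_eq_measure)
  have "ennreal L * emeasure lborel B = ennreal (L * (2 * c) ^ CARD('d))"
    unfolding \<open>emeasure lborel B = _\<close> using L0 c0 by (subst ennreal_mult) auto
  also have "L * (2 * c) ^ CARD('d) = (2 * \<delta> * exp(- (\<delta>^2))/(real CARD('d) * sqrt(2 * pi)))^CARD('d)"
  proof -
    have "exp (- (\<delta>^2)) / sqrt (2 * pi * t) * (2 * (\<delta> * sqrt t / d)) = 2 * \<delta> * exp (- (\<delta>^2)) / (d * sqrt (2 * pi))"
      using t d1 by (simp add: real_sqrt_mult field_simps)
    then show ?thesis unfolding L_def c_def d_def by (simp add: power_mult_distrib[symmetric])
  qed
  finally show ?thesis using 1 by (simp add: ennreal_le_iff2) (meson measure_nonneg order_trans)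
qed


lemma main_eps:
  fixes W :: "real \<Rightarrow> 'a \<Rightarrow> real^'d" and \<beta> :: "real^'d^'d"
  assumes bm: "brownian_motion M W" and C: "C > 0" and Cb: "\<And>x. \<bar>x \<bullet> (\<beta> *v x)\<bar> \<le> C * (norm x)^2"
    and ep: "\<epsilon> > 0"
  shows "\<exists>t::nat\<Rightarrow>real. (\<forall>k. 0 < t k) \<and> t \<longlonglongrightarrow> 0 \<and>
     (AE \<omega> in M. \<forall>m. \<exists>k\<ge>m. \<bar>W (t k) \<omega> \<bullet> (\<beta> *v W (t k) \<omega>)\<bar> / t k \<le> \<epsilon>)"
proof -
  have P: "prob_space M" and meas: "\<And>t. t \<ge> 0 \<Longrightarrow> W t \<in> borel_measurable M"
    and indep: "\<And>n \<tau>. 0 \<le> \<tau> 0 \<Longrightarrow> (\<forall>i<n. \<tau> i < \<tau> (Suc i)) \<Longrightarrow>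
        prob_space.indep_vars M (\<lambda>_. borel) (\<lambda>i \<omega>. W (\<tau> (Suc i)) \<omega> - W (\<tau> i) \<omega>) {..<n}"
    using bm unfolding brownian_motion_def by auto
  interpret prob_space M by (rule P)
  define \<delta> where "\<delta> = sqrt (\<epsilon> / (4 * C))"
  have dpos: "\<delta> > 0" using ep C by (simp add: \<delta>_def)
  have d2: "4 * C * \<delta>^2 = \<epsilon>" using ep C by (simp add: \<delta>_def)
  define p where "p = (2 * \<delta> * exp(- (\<delta>^2))/(real CARD('d) * sqrt(2 * pi)))^CARD('d)"
  have ppos: "p > 0" using dpos by (simp add: p_def)
  define Q where "Q T k s \<longleftrightarrow> 0 < s \<and> s \<le> T / 2 \<and>
      measure M {\<omega>\<in>space M. \<delta> * sqrt T < norm (W s \<omega>)} \<le> (1/2)^k" for T k s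
  have ex: "\<exists>s. Q T k s" if "T > 0" for T k
    using tail_small[OF bm, of "\<delta> * sqrt T" "(1/2)^k" "T/2"] that dpos unfolding Q_def by auto
  define t where "t = rec_nat 1 (\<lambda>k T. SOME s. Q T k s)"
  have t0: "t 0 = 1" by (simp add: t_def)
  have tS: "t (Suc k) = (SOME s. Q (t k) k s)" for k by (simp add: t_def)
  have tQ: "0 < t k \<and> Q (t k) k (t (Suc k))" for k
  proof (induction k)
    case 0 show ?case using ex[of 1 0] someI_ex[of "Q 1 0"] by (simp add: t0 tS)
  next
    case (Suc k)
    hence "0 < t (Suc k)" unfolding Q_def by auto
    then show ?case using ex[of "t (Suc k)" "Suc k"] someI_ex[of "Q (t (Suc k)) (Suc k)"] tS[of "Suc k"] by simp
  qed
  have tpos: "0 < t k" for k using tQ by auto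
  have thalf: "t (Suc k) \<le> t k / 2" for k using tQ[of k] unfolding Q_def by auto
  define r where "r k = \<delta> * sqrt (t k)" for k
  define U where "U k = {\<omega>\<in>space M. r k < norm (W (t (Suc k)) \<omega>)}" for k
  have Umeas: "measure M (U k) \<le> (1/2)^k" for k using tQ[of k] unfolding Q_def U_def r_def by auto
  have tle: "t k \<le> (1/2)^k" for k
  proof (induction k)
    case 0 then show ?case by (simp add: t0)
  next
    case (Suc k) then show ?case using thalf[of k] by simp
  qed
  have tlim: "t \<longlonglongrightarrow> 0"
    by (rule tendsto_sandwich[of "\<lambda>_. 0" _ _ "\<lambda>k. (1/2)^k"])
       (auto intro!: always_eventually less_imp_le tpos tle LIMSEQ_realpow_zero)
  have [measurable]: "W (t k) \<in> borel_measurable M" for k using meas tpos less_imp_le by blast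
  define G where "G k = {\<omega>\<in>space M. norm (W (t k) \<omega> - W (t (Suc k)) \<omega>) \<le> r k \<and> norm (W (t (Suc k)) \<omega>) \<le> r k}" for k
  have Gok: "\<bar>W (t k) \<omega> \<bullet> (\<beta> *v W (t k) \<omega>)\<bar> / t k \<le> \<epsilon>" if "\<omega> \<in> G k" for k \<omega>
  proof -
    have r0: "0 \<le> r k" using dpos tpos[of k] by (simp add: r_def)
    have "norm (W (t k) \<omega>) \<le> norm (W (t (Suc k)) \<omega>) + norm (W (t k) \<omega> - W (t (Suc k)) \<omega>)"
      by (rule norm_triangle_sub)
    also have "\<dots> \<le> 2 * r k" using that unfolding G_def by auto
    finally have nW: "norm (W (t k) \<omega>) \<le> 2 * r k" .
    have "\<bar>W (t k) \<omega> \<bullet> (\<beta> *v W (t k) \<omega>)\<bar> \<le> C * (norm (W (t k) \<omega>))^2" by (rule Cb)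
    also have "\<dots> \<le> C * (2 * r k)^2" using C nW by (intro mult_left_mono power_mono) auto
    also have "\<dots> = 4 * C * \<delta>^2 * t k" using tpos[of k] by (simp add: r_def power_mult_distrib)
    also have "\<dots> = \<epsilon> * t k" using d2 by simp
    finally show ?thesis using tpos[of k] by (simp add: divide_le_eq)
  qed
  define S where "S k = {\<omega>\<in>space M. norm (W (t k) \<omega> - W (t (Suc k)) \<omega>) \<le> r k}" for k
  have Ssets: "S k \<in> sets M" for k unfolding S_def by measurable
  have plow: "p \<le> measure M (S k)" for k
    unfolding p_def S_def r_def
    using incr_lower[OF bm, of "t (Suc k)" "t k" \<delta>] tpos[of k] tpos[of "Suc k"] thalf[of k] dpos by simp
  define E where "E m = {\<omega>\<in>space M. \<forall>k\<ge>m. \<omega> \<notin> G k}" for m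
  have Esets: "E m \<in> sets M" for m unfolding E_def G_def by measurable
  have Emono: "E m \<subseteq> E m'" if "m \<le> m'" for m m' using that unfolding E_def by auto
  have Usets: "U k \<in> sets M" for k unfolding U_def by measurable
  have Ebound: "measure M (E m) \<le> (1 - p)^(Suc N) + 2 * (1/2)^m" for m N
  proof -
    define \<tau> where "\<tau> i = t (m + (Suc N - i))" for i
    define X where "X i \<omega> = W (\<tau> (Suc i)) \<omega> - W (\<tau> i) \<omega>" for i \<omega>
    define B where "B i = X i -` {x. r (m + (N - i)) < norm x} \<inter> space M" for i
    have \<tau>S: "\<tau> (Suc i) = t (m + (N - i))" for i by (simp add: \<tau>_def)
    have \<tau>i: "\<tau> i = t (Suc (m + (N - i)))" if "i \<le> N" for i
      using that by (simp add: \<tau>_def Suc_diff_le)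
    have ind: "indep_vars (\<lambda>_. borel) X {..<Suc N}"
      unfolding X_def
    proof (rule indep)
      show "0 \<le> \<tau> 0" using tpos[of "m + Suc N"] by (simp add: \<tau>_def)
      show "\<forall>i<Suc N. \<tau> i < \<tau> (Suc i)"
      proof (intro allI impI)
        fix i assume "i < Suc N"
        hence "i \<le> N" by simp
        have "t (Suc (m + (N - i))) \<le> t (m + (N - i)) / 2" by (rule thalf)
        moreover have "0 < t (m + (N - i))" by (rule tpos)
        ultimately show "\<tau> i < \<tau> (Suc i)" unfolding \<tau>S \<tau>i[OF \<open>i \<le> N\<close>] by linarith
      qed
    qed
    hence isets: "indep_sets (\<lambda>i. {X i -` A \<inter> space M |A. A \<in> sets borel}) {..<Suc N}"
      unfolding indep_vars_def2 by simp
    have Bmem: "B i \<in> {X i -` A \<inter> space M |A. A \<in> sets borel}" for i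
    proof -
      have "{x::real^'d. r (m + (N - i)) < norm x} \<in> sets borel" by measurable
      then show ?thesis unfolding B_def by blast
    qed
    have prodeq: "measure M (\<Inter>(B ` {..<Suc N})) = (\<Prod>i\<in>{..<Suc N}. measure M (B i))"
      by (rule indep_setsD[OF isets]) (use Bmem in blast)+
    have Bi: "B i = space M - S (m + (N - i))" if "i \<le> N" for i
      unfolding B_def S_def X_def using \<tau>S[of i] \<tau>i[OF that] by auto
    have Ble: "measure M (B i) \<le> 1 - p" if "i \<le> N" for i
      unfolding Bi[OF that] using prob_compl[OF Ssets, of "m + (N - i)"] plow[of "m + (N - i)"] by simp
    have "(\<Prod>i\<in>{..<Suc N}. measure M (B i)) \<le> (\<Prod>i\<in>{..<Suc N}. 1 - p)"
      using Ble by (intro prod_mono) auto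
    hence prodle: "measure M (\<Inter>(B ` {..<Suc N})) \<le> (1 - p)^(Suc N)" using prodeq by simp
    have gs: "(\<lambda>j. (1/2::real)^m * (1/2)^j) sums ((1/2)^m * 2)"
      using sums_mult[OF geometric_sums[of "1/2::real"], of "(1/2)^m"] by simp
    have Ule: "measure M (U (m + j)) \<le> (1/2)^m * (1/2)^j" for j
      using Umeas[of "m + j"] by (simp add: power_add)
    have sU: "summable (\<lambda>j. measure M (U (m + j)))"
      by (rule summable_comparison_test'[where g="\<lambda>j. (1/2::real)^m * (1/2)^j" and N=0])
         (use Ule gs sums_summable in auto)
    have "measure M (\<Union>j. U (m + j)) \<le> (\<Sum>j. measure M (U (m + j)))"
      using Usets sU by (intro finite_measure_subadditive_countably) auto
    also have "\<dots> \<le> (\<Sum>j. (1/2::real)^m * (1/2)^j)"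
      using Ule sU gs by (intro suminf_le) (auto simp: sums_summable)
    also have "\<dots> = 2 * (1/2)^m" using gs sums_unique by fastforce
    finally have Ule2: "measure M (\<Union>j. U (m + j)) \<le> 2 * (1/2)^m" .
    have sub: "E m \<subseteq> \<Inter>(B ` {..<Suc N}) \<union> (\<Union>j. U (m + j))"
    proof
      fix \<omega> assume \<omega>: "\<omega> \<in> E m"
      show "\<omega> \<in> \<Inter>(B ` {..<Suc N}) \<union> (\<Union>j. U (m + j))"
      proof (cases "\<omega> \<in> (\<Union>j. U (m + j))")
        case False
        have "\<omega> \<in> B i" if "i < Suc N" for i
        proof -
          have iN: "i \<le> N" using that by simp
          have "\<omega> \<notin> U (m + (N - i))" using False by blast
          moreover have "\<omega> \<notin> G (m + (N - i))" using \<omega> unfolding E_def by auto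
          moreover have "\<omega> \<in> space M" using \<omega> unfolding E_def by auto
          ultimately show ?thesis unfolding Bi[OF iN] S_def U_def G_def by auto
        qed
        then show ?thesis by blast
      qed blast
    qed
    have Bsets': "\<Inter>(B ` {..<Suc N}) \<in> sets M"
      using Bi Ssets by (intro sets.finite_INT) auto
    have "measure M (E m) \<le> measure M (\<Inter>(B ` {..<Suc N}) \<union> (\<Union>j. U (m + j)))"
      using sub Bsets' Usets by (intro finite_measure_mono) auto
    also have "\<dots> \<le> measure M (\<Inter>(B ` {..<Suc N})) + measure M (\<Union>j. U (m + j))"
      using Bsets' Usets by (intro measure_Un_le) auto
    finally show ?thesis using prodle Ule2 by linarith
  qed
  have p1: "p \<le> 1" using plow[of 0] prob_le_1[of "S 0"] by linarith
  have Enull: "measure M (E m) = 0" for m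
  proof (rule ccontr)
    assume "measure M (E m) \<noteq> 0"
    hence a: "measure M (E m) > 0" using measure_nonneg[of M "E m"] by linarith
    obtain N where N: "(1 - p)^N < measure M (E m) / 2"
      using real_arch_pow_inv[of "measure M (E m) / 2" "1 - p"] a ppos by auto
    obtain n where n: "(1/2::real)^n < measure M (E m) / 4"
      using real_arch_pow_inv[of "measure M (E m) / 4" "1/2"] a by auto
    have "(1 - p)^(Suc N) \<le> (1 - p)^N" using ppos p1 by (intro power_decreasing) auto
    moreover have "(1/2::real)^(m + n) \<le> (1/2)^n" by (intro power_decreasing) auto
    moreover have "measure M (E m) \<le> measure M (E (m + n))" using Emono Esets by (intro finite_measure_mono) auto
    ultimately show False using Ebound[of "m + n" N] N n by linarith
  qed
  have "AE \<omega> in M. \<omega> \<notin> (\<Union>m. E m)"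
  proof (rule AE_I')
    show "(\<Union>m. E m) \<in> null_sets M"
    proof (rule null_sets_UN)
      fix m show "E m \<in> null_sets M" using Enull[of m] Esets[of m] by (simp add: null_sets_def emeasure_eq_measure)
    qed
  qed auto
  then have "AE \<omega> in M. \<forall>m. \<exists>k\<ge>m. \<bar>W (t k) \<omega> \<bullet> (\<beta> *v W (t k) \<omega>)\<bar> / t k \<le> \<epsilon>"
  proof (rule AE_mp, intro AE_I2 impI allI)
    fix \<omega> m assume "\<omega> \<in> space M" "\<omega> \<notin> (\<Union>m. E m)"
    then obtain k where "k \<ge> m" "\<omega> \<in> G k" unfolding E_def by auto
    then show "\<exists>k\<ge>m. \<bar>W (t k) \<omega> \<bullet> (\<beta> *v W (t k) \<omega>)\<bar> / t k \<le> \<epsilon>" using Gok by blast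
  qed
  then show ?thesis using tpos tlim by blast
qed


lemma liminf_seq_le:
  fixes f :: "real \<Rightarrow> ereal"
  assumes freq: "\<And>m. \<exists>k\<ge>m. f (s k) \<le> c" and lim: "s \<longlonglongrightarrow> 0" and pos: "\<And>k. s k > 0"
  shows "Liminf (at_right 0) f \<le> c"
  unfolding Liminf_def
proof (rule SUP_least)
  fix P assume "P \<in> {P. eventually P (at_right (0::real))}"
  then obtain b where b: "b > 0" "\<And>y. y > 0 \<Longrightarrow> y < b \<Longrightarrow> P y"
    unfolding eventually_at_right_field by auto
  from lim b(1) have "eventually (\<lambda>k. s k < b) sequentially"
    by (rule order_tendstoD)
  then obtain m where m: "\<And>k. k \<ge> m \<Longrightarrow> s k < b" by (auto simp: eventually_sequentially)
  obtain k where k: "k \<ge> m" "f (s k) \<le> c" using freq by blast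
  have "P (s k)" using b(2)[OF pos m[OF k(1)]] .
  hence "\<Sqinter> (f ` {x. P x}) \<le> f (s k)" by (intro INF_lower) auto
  also have "\<dots> \<le> c" by (rule k(2))
  finally show "\<Sqinter> (f ` {x. P x}) \<le> c" .
qed


theorem lemma3p5:
  fixes M :: "'a measure" and W :: "real \<Rightarrow> 'a \<Rightarrow> real^'d" and \<beta> :: "real^'d^'d"
  assumes "brownian_motion M W"
  shows "AE \<omega> in M.
           Liminf (at_right 0) (\<lambda>t. ereal (\<bar>W t \<omega> \<bullet> (\<beta> *v W t \<omega>)\<bar> / t)) = 0"
proof -
  obtain K where K: "K > 0" "\<And>x. norm (\<beta> *v x) \<le> norm x * K"
    using bounded_linear.pos_bounded[OF matrix_vector_mul_bounded_linear[of \<beta>]] by blast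
  have Cb: "\<bar>x \<bullet> (\<beta> *v x)\<bar> \<le> K * (norm x)^2" for x :: "real^'d"
  proof -
    have "\<bar>x \<bullet> (\<beta> *v x)\<bar> \<le> norm x * norm (\<beta> *v x)" by (rule Cauchy_Schwarz_ineq2)
    also have "\<dots> \<le> norm x * (norm x * K)" by (intro mult_left_mono K(2)) auto
    finally show ?thesis by (simp add: power2_eq_square mult_ac)
  qed
  have "\<forall>n. \<exists>t::nat\<Rightarrow>real. (\<forall>k. 0 < t k) \<and> t \<longlonglongrightarrow> 0 \<and>
     (AE \<omega> in M. \<forall>m. \<exists>k\<ge>m. \<bar>W (t k) \<omega> \<bullet> (\<beta> *v W (t k) \<omega>)\<bar> / t k \<le> inverse (real (Suc n)))"
    using main_eps[OF assms K(1) Cb] by (intro allI) simp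
  from choice[OF this] obtain T where T: "\<forall>n. (\<forall>k. 0 < T n k) \<and> T n \<longlonglongrightarrow> 0 \<and>
     (AE \<omega> in M. \<forall>m. \<exists>k\<ge>m. \<bar>W (T n k) \<omega> \<bullet> (\<beta> *v W (T n k) \<omega>)\<bar> / T n k \<le> inverse (real (Suc n)))"
    by blast
  have "AE \<omega> in M. \<forall>n. \<forall>m. \<exists>k\<ge>m. \<bar>W (T n k) \<omega> \<bullet> (\<beta> *v W (T n k) \<omega>)\<bar> / T n k \<le> inverse (real (Suc n))"
    by (subst AE_all_countable) (use T in blast)
  then show ?thesis
  proof eventually_elim
    case (elim \<omega>)
    let ?f = "\<lambda>t. ereal (\<bar>W t \<omega> \<bullet> (\<beta> *v W t \<omega>)\<bar> / t)"
    have up: "Liminf (at_right 0) ?f \<le> ereal (inverse (real (Suc n)))" for n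
      by (rule liminf_seq_le[of ?f "T n"]) (use elim T in simp_all)
    have "Liminf (at_right 0) ?f \<le> 0"
    proof (rule ereal_le_epsilon2)
      fix e :: real assume "0 < e"
      then obtain n where "inverse (real (Suc n)) < e" using reals_Archimedean by blast
      then show "Liminf (at_right 0) ?f \<le> 0 + ereal e" using up[of n] by (simp add: order_trans)
    qed
    moreover have "0 \<le> Liminf (at_right 0) ?f"
    proof (rule Liminf_bounded)
      show "\<forall>\<^sub>F t in at_right 0. 0 \<le> ?f t"
        unfolding eventually_at_right_field by (intro exI[of _ 1]) auto
    qed
    ultimately show ?case by (rule antisym)
  qed
qed


end
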